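(* Let $\rho\in(0,1]$, $r,h,p,q\in\mathbb{N}$ with $r\geq 2$, and let $\mathcal{N}$ be a support-preserving Euclidean $\rho$-net on the set of all $h$-sparse unit vectors in $\mathbb{R}^q$. Let $T$ be any $p\times q$ real matrix. Then $$\sup_{\substack{u\in S^{q-1},\\|\mathrm{supp}\,u|\leq h}}\textstyle\max^{(r)}_{\ell\in[p]}|Tu|_\ell\leq 2\sup_{v\in\mathcal{N}}\max^{(\lfloor r/2\rfloor)}_{\ell\in[p]}|Tv|_\ell+\frac{4\rho}{\sqrt{r}}\sup_{\substack{u\in S^{q-1},\\|\mathrm{supp}\,u|\leq h}}\Bigl(\sum_{i=1}^r\bigl(\max^{(i)}_{\ell\in[p]}|Tu|_\ell\bigr)^2\Bigr)^{1/2}.$$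
   Context: A vector is $h$-sparse if it has at most $h$ nonzero coordinates. A subset $\mathcal{N}$ of a set $S\subset\mathbb{R}^q$ is a support-preserving Euclidean $\rho$-net in $S$ if for every $x\in S$ there is $y\in\mathcal{N}$ with $\mathrm{supp}\,y\subset\mathrm{supp}\,x$ and $\|x-y\|\leq\rho$. For $v\in\mathbb{R}^p$, $|v|_\ell$ is the absolute value of its $\ell$-th coordinate. For a non-negative sequence $(a_\ell)_{\ell\in J}$ and $k\in\mathbb{N}$, $\max^{(k)}_{\ell\in J}a_\ell$ denotes its $k$-th largest element ($0$ if $k>|J|$). *)

theory Defs
  imports "HOL-Analysis.Analysis" "HOL-Library.Multiset"
begin

definition supp :: "real ^ 'n \<Rightarrow> 'n set" where
  "supp x = {i. x $ i \<noteq> 0}"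

definition sparse_sphere :: "nat \<Rightarrow> (real ^ 'n) set" where
  "sparse_sphere h = {u. norm u = 1 \<and> card (supp u) \<le> h}"

definition supp_pres_net :: "real \<Rightarrow> (real ^ 'n) set \<Rightarrow> (real ^ 'n) set \<Rightarrow> bool" where
  "supp_pres_net \<rho> N S \<longleftrightarrow> N \<subseteq> S \<and>
     (\<forall>x\<in>S. \<exists>y\<in>N. supp y \<subseteq> supp x \<and> norm (x - y) \<le> \<rho>)"

text \<open>k-th largest element (with multiplicity) of the family a over the finite index
  set J; 0 if k > |J| (and also for k = 0, which is never used).\<close>
definition kth_largest :: "nat \<Rightarrow> 'l set \<Rightarrow> ('l \<Rightarrow> real) \<Rightarrow> real" where
  "kth_largest k J a =
     (let xs = rev (sorted_list_of_multiset (image_mset a (mset_set J)))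
      in if 1 \<le> k \<and> k \<le> length xs then xs ! (k - 1) else 0)"

text \<open>Supremum of a set of nonnegative reals, with the convention sup of empty set = 0.\<close>
definition sup0 :: "real set \<Rightarrow> real" where
  "sup0 A = Sup (insert 0 A)"

end

theory Submission
  imports Defs
begin

lemma kth_count:
  fixes a :: "'l \<Rightarrow> real" and J :: "'l set"
  assumes "finite J"
  defines "ys \<equiv> sorted_list_of_multiset (image_mset a (mset_set J))"
  shows "length ys = card J" "sorted ys"
    "card {l\<in>J. P (a l)} = card {i. i < length ys \<and> P (ys ! i)}"
proof -
  have m: "mset ys = image_mset a (mset_set J)" unfolding ys_def by simp
  show "length ys = card J" using arg_cong[OF m, of size] by simp
  show "sorted ys" unfolding ys_def by simp
  have "length (filter P ys) = size (filter_mset P (mset ys))" by (metis mset_filter size_mset)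
  also have "\<dots> = card {l\<in>J. P (a l)}" using assms(1) by (simp add: m filter_mset_image_mset)
  finally show "card {l\<in>J. P (a l)} = card {i. i < length ys \<and> P (ys ! i)}"
    by (simp add: length_filter_conv_card)
qed

lemma kth_alt:
  assumes "finite J" "1 \<le> k" "k \<le> card J"
  shows "kth_largest k J a = sorted_list_of_multiset (image_mset a (mset_set J)) ! (card J - k)"
proof -
  define ys where "ys = sorted_list_of_multiset (image_mset a (mset_set J))"
  have l: "length ys = card J" using kth_count(1)[OF assms(1)] ys_def by simp
  show ?thesis unfolding kth_largest_def Let_def ys_def[symmetric]
    using assms l by (simp add: rev_nth)
qed

lemma kth_big:
  assumes "finite J" "1 \<le> k" "card J < k"
  shows "kth_largest k J a = 0"
proof -
  have "length (sorted_list_of_multiset (image_mset a (mset_set J))) = card J"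
    using kth_count(1)[OF assms(1)] by simp
  then show ?thesis unfolding kth_largest_def Let_def using assms by simp
qed

lemma kth_L1:
  assumes "finite J" "1 \<le> k" "card {l\<in>J. a l \<ge> t} \<ge> k"
  shows "kth_largest k J a \<ge> t"
proof -
  have "card {l\<in>J. a l \<ge> t} \<le> card J" using assms(1) by (intro card_mono) auto
  hence kJ: "k \<le> card J" using assms by simp
  define ys where "ys = sorted_list_of_multiset (image_mset a (mset_set J))"
  note c = kth_count[OF assms(1), where a=a, folded ys_def]
  have e: "kth_largest k J a = ys ! (card J - k)" using kth_alt[OF assms(1,2) kJ] ys_def by simp
  show ?thesis
  proof (rule ccontr)
    assume "\<not> ?thesis"
    hence lt: "ys ! (card J - k) < t" using e by simp
    have "{i. i < length ys \<and> t \<le> ys ! i} \<subseteq> {card J - k + 1..<card J}"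
    proof
      fix i assume "i \<in> {i. i < length ys \<and> t \<le> ys ! i}"
      hence i: "i < length ys" "t \<le> ys ! i" by auto
      have "\<not> i \<le> card J - k"
      proof
        assume "i \<le> card J - k"
        hence "ys ! i \<le> ys ! (card J - k)" using sorted_nth_mono[OF c(2)] c(1) kJ assms(2) by simp
        thus False using i lt by simp
      qed
      thus "i \<in> {card J - k + 1..<card J}" using i c(1) by simp
    qed
    hence "card {i. i < length ys \<and> t \<le> ys ! i} \<le> card {card J - k + 1..<card J}"
      by (intro card_mono) auto
    also have "\<dots> < k" using assms(2) kJ by simp
    finally show False using c(3)[of "\<lambda>x. t \<le> x"] assms(3) by simp
  qed
qed

lemma kth_L2:
  assumes "finite J" "1 \<le> k" "card {l\<in>J. a l > t} < k" "0 \<le> t"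
  shows "kth_largest k J a \<le> t"
proof (cases "k \<le> card J")
  case False thus ?thesis using kth_big[OF assms(1,2)] assms(4) by simp
next
  case kJ: True
  define ys where "ys = sorted_list_of_multiset (image_mset a (mset_set J))"
  note c = kth_count[OF assms(1), where a=a, folded ys_def]
  have e: "kth_largest k J a = ys ! (card J - k)" using kth_alt[OF assms(1,2) kJ] ys_def by simp
  show ?thesis
  proof (rule ccontr)
    assume "\<not> ?thesis"
    hence lt: "ys ! (card J - k) > t" using e by simp
    have "{card J - k..<card J} \<subseteq> {i. i < length ys \<and> t < ys ! i}"
    proof
      fix i assume i: "i \<in> {card J - k..<card J}"
      hence "ys ! (card J - k) \<le> ys ! i" using sorted_nth_mono[OF c(2)] c(1) by simp
      thus "i \<in> {i. i < length ys \<and> t < ys ! i}" using i lt c(1) by simp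
    qed
    hence "card {card J - k..<card J} \<le> card {i. i < length ys \<and> t < ys ! i}"
      by (intro card_mono) auto
    hence "k \<le> card {l\<in>J. a l > t}" using c(3)[of "\<lambda>x. t < x"] kJ by simp
    thus False using assms(3) by simp
  qed
qed

lemma kth_L3:
  assumes "finite J" "1 \<le> k"
  shows "card {l\<in>J. a l > kth_largest k J a} < k"
proof (rule ccontr)
  define x where "x = kth_largest k J a"
  define P where "P = {l\<in>J. a l > x}"
  assume "\<not> card {l\<in>J. a l > kth_largest k J a} < k"
  hence cP: "card P \<ge> k" unfolding P_def x_def by simp
  have fP: "finite P" using assms(1) unfolding P_def by simp
  have ne: "P \<noteq> {}" using cP assms(2) by auto
  define m where "m = Min (a ` P)"
  have mx: "m > x" unfolding m_def using fP ne by (auto simp: P_def)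
  have "P \<subseteq> {l\<in>J. a l \<ge> m}" unfolding m_def using fP by (auto simp: P_def)
  hence "card P \<le> card {l\<in>J. a l \<ge> m}" using assms(1) by (intro card_mono) auto
  hence "kth_largest k J a \<ge> m" using kth_L1[OF assms] cP by simp
  thus False using mx x_def by simp
qed

lemma kth_nonneg:
  assumes "finite J" "1 \<le> k" "\<And>l. a l \<ge> 0"
  shows "kth_largest k J a \<ge> 0"
  using kth_L1[OF assms(1,2), of 0 a] proof (cases "k \<le> card J")
  case True
  have "{l\<in>J. a l \<ge> 0} = J" using assms(3) by auto
  thus ?thesis using kth_L1[OF assms(1,2), of 0 a] True by simp
next
  case False thus ?thesis using kth_big[OF assms(1,2)] by simp
qed

lemma kth_anti:
  assumes "finite J" "1 \<le> i" "i \<le> j" "\<And>l. a l \<ge> 0"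
  shows "kth_largest j J a \<le> kth_largest i J a"
  using kth_L2[OF assms(1), where k=j and a=a and t="kth_largest i J a"] kth_L3[OF assms(1,2), where a=a]
    kth_nonneg[OF assms(1,2) assms(4)] assms by simp

lemma kth_scale:
  assumes "finite J" "1 \<le> k" "c \<ge> 0" "\<And>l. a l \<ge> 0" "\<And>l. b l \<le> c * a l"
  shows "kth_largest k J b \<le> c * kth_largest k J a"
proof (rule kth_L2[OF assms(1,2)])
  show "0 \<le> c * kth_largest k J a" using kth_nonneg[OF assms(1,2,4)] assms(3) by simp
  have "{l\<in>J. b l > c * kth_largest k J a} \<subseteq> {l\<in>J. a l > kth_largest k J a}"
  proof safe
    fix l assume "l \<in> J" "b l > c * kth_largest k J a"
    hence "c * a l > c * kth_largest k J a" using assms(5)[of l] by linarith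
    thus "a l > kth_largest k J a" using assms(3) by (simp add: mult_less_cancel_left)
  qed
  hence "card {l\<in>J. b l > c * kth_largest k J a} \<le> card {l\<in>J. a l > kth_largest k J a}"
    using assms(1) by (intro card_mono) auto
  thus "card {l\<in>J. b l > c * kth_largest k J a} < k" using kth_L3[OF assms(1,2), where a=a] by simp
qed

lemma kth_tri:
  assumes "finite J" "1 \<le> i" "1 \<le> j" "\<And>l. a l \<ge> 0" "\<And>l. b l \<ge> 0"
    "\<And>l. c l \<le> a l + b l"
  shows "kth_largest (i + j - 1) J c \<le> kth_largest i J a + kth_largest j J b"
proof (rule kth_L2[OF assms(1)])
  show "1 \<le> i + j - 1" using assms by simp
  show "0 \<le> kth_largest i J a + kth_largest j J b"
    using kth_nonneg[OF assms(1,2,4)] kth_nonneg[OF assms(1,3,5)] by simp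
  have "{l\<in>J. c l > kth_largest i J a + kth_largest j J b} \<subseteq>
     {l\<in>J. a l > kth_largest i J a} \<union> {l\<in>J. b l > kth_largest j J b}"
  proof -
    have "\<And>l. c l > kth_largest i J a + kth_largest j J b \<Longrightarrow> a l > kth_largest i J a \<or> b l > kth_largest j J b"
      using assms(6) by (smt (verit))
    thus ?thesis by blast
  qed
  hence "card {l\<in>J. c l > kth_largest i J a + kth_largest j J b} \<le>
     card ({l\<in>J. a l > kth_largest i J a} \<union> {l\<in>J. b l > kth_largest j J b})"
    using assms(1) by (intro card_mono) auto
  also have "\<dots> \<le> card {l\<in>J. a l > kth_largest i J a} + card {l\<in>J. b l > kth_largest j J b}"
    by (rule card_Un_le)
  finally show "card {l\<in>J. c l > kth_largest i J a + kth_largest j J b} < i + j - 1"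
    using kth_L3[OF assms(1,2), of a] kth_L3[OF assms(1,3), of b] by simp
qed

lemma kth_avg:
  assumes "finite J" "1 \<le> j" "j \<le> r" "\<And>l. a l \<ge> 0"
  shows "sqrt (real j) * kth_largest j J a \<le> sqrt (\<Sum>i=1..r. (kth_largest i J a)\<^sup>2)"
proof -
  have "real j * (kth_largest j J a)\<^sup>2 = (\<Sum>i=1..j. (kth_largest j J a)\<^sup>2)" by simp
  also have "\<dots> \<le> (\<Sum>i=1..j. (kth_largest i J a)\<^sup>2)"
  proof (rule sum_mono)
    fix i assume "i \<in> {1..j}"
    thus "(kth_largest j J a)\<^sup>2 \<le> (kth_largest i J a)\<^sup>2"
      using kth_anti[OF assms(1), of i j a] kth_nonneg[OF assms(1,2,4)] assms(4)
      by (intro power_mono) auto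
  qed
  also have "\<dots> \<le> (\<Sum>i=1..r. (kth_largest i J a)\<^sup>2)"
    using assms(3) by (intro sum_mono2) auto
  finally have "sqrt (real j * (kth_largest j J a)\<^sup>2) \<le> sqrt (\<Sum>i=1..r. (kth_largest i J a)\<^sup>2)"
    by (rule real_sqrt_le_mono)
  thus ?thesis using kth_nonneg[OF assms(1,2,4)] by (simp add: real_sqrt_mult)
qed

lemma sup0_upper: "bdd_above A \<Longrightarrow> x \<in> A \<Longrightarrow> x \<le> sup0 A"
  unfolding sup0_def by (rule cSup_upper) auto

lemma sup0_nonneg: "bdd_above A \<Longrightarrow> 0 \<le> sup0 A"
  unfolding sup0_def by (rule cSup_upper) auto

lemma sup0_least: "0 \<le> B \<Longrightarrow> (\<And>x. x \<in> A \<Longrightarrow> x \<le> B) \<Longrightarrow> sup0 A \<le> B"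
  unfolding sup0_def by (rule cSup_least) auto

lemma supp_finite_card: "card (supp (x::real^'n)) \<le> CARD('n)"
  by (rule card_mono) auto

theorem lemma4p3:
  fixes \<rho> :: real and r h :: nat
    and N :: "(real ^ 'q) set"
    and T :: "real ^ 'q ^ 'p"
  assumes "0 < \<rho>" and "\<rho> \<le> 1" and "r \<ge> 2"
    and "supp_pres_net \<rho> N (sparse_sphere h)"
  shows "sup0 ((\<lambda>u. kth_largest r UNIV (\<lambda>l. \<bar>(T *v u) $ l\<bar>)) ` sparse_sphere h)
    \<le> 2 * sup0 ((\<lambda>v. kth_largest (r div 2) UNIV (\<lambda>l. \<bar>(T *v v) $ l\<bar>)) ` N)
      + 4 * \<rho> / sqrt (real r) *
        sup0 ((\<lambda>u. sqrt (\<Sum>i=1..r. (kth_largest i UNIV (\<lambda>l. \<bar>(T *v u) $ l\<bar>))\<^sup>2))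
               ` sparse_sphere h)"
proof -
  define K where "K = (\<lambda>k (u::real^'q). kth_largest k (UNIV::'p set) (\<lambda>l. \<bar>(T *v u) $ l\<bar>))"
  define Q where "Q = (\<lambda>u. sqrt (\<Sum>i=1..r. (K i u)\<^sup>2))"
  define A where "A = sup0 ((\<lambda>v. K (r div 2) v) ` N)"
  define S where "S = sup0 (Q ` sparse_sphere h)"
  have fin: "finite (UNIV :: 'p set)" by simp
  obtain B0 where B0: "B0 > 0" "\<And>x. norm (T *v x) \<le> norm x * B0"
    using bounded_linear.pos_bounded[OF matrix_vector_mul_bounded_linear[of T]] by blast
  have Kb: "K k u \<le> B0" if "1 \<le> k" "norm u = 1" for k u
  proof -
    have "\<bar>(T *v u) $ l\<bar> \<le> B0" for l
      using component_le_norm_cart[of "T *v u" l] B0(2)[of u] that(2) by simp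
    hence "{l\<in>UNIV. \<bar>(T *v u) $ l\<bar> > B0} = {}" by (auto simp: not_less)
    thus ?thesis unfolding K_def
      using kth_L2[OF fin that(1), where t=B0 and a="\<lambda>l. \<bar>(T *v u) $ l\<bar>"] B0(1) that(1) by simp
  qed
  have Kn: "K k u \<ge> 0" if "1 \<le> k" for k u
    unfolding K_def by (rule kth_nonneg[OF fin that]) simp
  have NS: "N \<subseteq> sparse_sphere h" using assms(4) unfolding supp_pres_net_def by simp
  have r2: "1 \<le> r div 2" using assms(3) by simp
  have bddA: "bdd_above ((\<lambda>v. K (r div 2) v) ` N)"
    using Kb[OF r2] NS unfolding sparse_sphere_def bdd_above_def by blast
  have Qb: "Q u \<le> sqrt (real r * B0\<^sup>2)" if "norm u = 1" for u
  proof -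
    have "(\<Sum>i=1..r. (K i u)\<^sup>2) \<le> (\<Sum>i=1..r. B0\<^sup>2)"
      by (intro sum_mono power_mono) (use Kb[OF _ that] Kn in auto)
    thus ?thesis unfolding Q_def by simp
  qed
  have bddS: "bdd_above (Q ` sparse_sphere h)"
    using Qb unfolding sparse_sphere_def bdd_above_def by blast
  have A0: "0 \<le> A" unfolding A_def by (rule sup0_nonneg[OF bddA])
  have S0: "0 \<le> S" unfolding S_def by (rule sup0_nonneg[OF bddS])
  have rpos: "0 < sqrt (real r)" using assms(3) by simp
  have main: "K r u \<le> A + \<rho> * sqrt 2 / sqrt (real r) * S" if u: "u \<in> sparse_sphere h" for u
  proof -
    obtain v where v: "v \<in> N" "supp v \<subseteq> supp u" "norm (u - v) \<le> \<rho>"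
      using assms(4) u unfolding supp_pres_net_def by blast
    define w where "w = u - v"
    define i0 where "i0 = r div 2"
    define j0 where "j0 = r - i0 + 1"
    have i0: "1 \<le> i0" "i0 \<le> r" using assms(3) unfolding i0_def by auto
    have j0: "1 \<le> j0" "j0 \<le> r" "real r \<le> 2 * real j0" using assms(3) unfolding j0_def i0_def by auto
    have rij: "i0 + j0 - 1 = r" using i0 unfolding j0_def by simp
    have tri: "K r u \<le> K i0 v + K j0 w"
      unfolding K_def rij[symmetric]
    proof (rule kth_tri[OF fin i0(1) j0(1)])
      fix l
      have "T *v u = T *v v + T *v w" unfolding w_def by (simp add: matrix_vector_mult_diff_distrib)
      thus "\<bar>(T *v u) $ l\<bar> \<le> \<bar>(T *v v) $ l\<bar> + \<bar>(T *v w) $ l\<bar>" by simp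
    qed auto
    have x: "K i0 v \<le> A" unfolding A_def i0_def by (rule sup0_upper[OF bddA]) (use v in auto)
    have y: "K j0 w \<le> \<rho> * sqrt 2 / sqrt (real r) * S"
    proof (cases "w = 0")
      case True
      have "K j0 w \<le> 0" unfolding K_def True using kth_L2[OF fin j0(1), where t=0 and a="\<lambda>l. 0"] j0(1) by simp
      moreover have "0 \<le> \<rho> * sqrt 2 / sqrt (real r) * S" using S0 assms(1) rpos by simp
      ultimately show ?thesis by linarith
    next
      case False
      define w' where "w' = w /\<^sub>R norm w"
      have nw: "norm w > 0" using False by simp
      have sw: "supp w' \<subseteq> supp u" using v(2) unfolding w'_def w_def supp_def by auto
      have w'S: "w' \<in> sparse_sphere h"
        using u card_mono[OF _ sw] nw unfolding sparse_sphere_def w'_def by auto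
      have "K j0 w \<le> norm w * K j0 w'"
        unfolding K_def
      proof (rule kth_scale[OF fin j0(1)])
        fix l
        have "T *v w = norm w *\<^sub>R (T *v w')" unfolding w'_def using nw
          by (simp add: matrix_vector_mult_scaleR)
        thus "\<bar>(T *v w) $ l\<bar> \<le> norm w * \<bar>(T *v w') $ l\<bar>" by (simp add: abs_mult)
      qed auto
      also have "\<dots> \<le> \<rho> * K j0 w'" using v(3) Kn[OF j0(1)] unfolding w_def
        by (intro mult_right_mono) auto
      finally have y1: "K j0 w \<le> \<rho> * K j0 w'" .
      have y2: "K j0 w' \<le> Q w' / sqrt (real j0)"
        using kth_avg[OF fin j0(1,2), of "\<lambda>l. \<bar>(T *v w') $ l\<bar>"] j0(1)
        unfolding Q_def K_def by (simp add: field_simps)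
      have y3: "Q w' \<le> S" unfolding S_def by (rule sup0_upper[OF bddS]) (use w'S in auto)
      have y4: "1 / sqrt (real j0) \<le> sqrt 2 / sqrt (real r)"
      proof -
        have "sqrt (real r) \<le> sqrt 2 * sqrt (real j0)"
          using j0(3) by (simp add: real_sqrt_mult[symmetric])
        thus ?thesis using j0(1) rpos by (simp add: field_simps)
      qed
      have "K j0 w' \<le> S * (1 / sqrt (real j0))" 
      proof -
        have "Q w' / sqrt (real j0) \<le> S / sqrt (real j0)" using y3 by (simp add: divide_right_mono)
        thus ?thesis using y2 by simp
      qed
      also have "\<dots> \<le> S * (sqrt 2 / sqrt (real r))" using y4 S0 by (rule mult_left_mono)
      finally have "\<rho> * K j0 w' \<le> \<rho> * (S * (sqrt 2 / sqrt (real r)))"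
        using assms(1) by (intro mult_left_mono) auto
      with y1 show ?thesis by (simp add: mult_ac)
    qed
    show ?thesis using tri x y by linarith
  qed
  have "sup0 ((\<lambda>u. K r u) ` sparse_sphere h) \<le> A + \<rho> * sqrt 2 / sqrt (real r) * S"
  proof (rule sup0_least)
    show "0 \<le> A + \<rho> * sqrt 2 / sqrt (real r) * S" using A0 S0 assms(1) rpos by simp
  qed (use main in auto)
  also have "\<dots> \<le> 2 * A + 4 * \<rho> / sqrt (real r) * S"
  proof -
    have "\<rho> * sqrt 2 / sqrt (real r) * S \<le> 4 * \<rho> / sqrt (real r) * S"
    proof (intro mult_right_mono divide_right_mono)
      have "sqrt 2 \<le> sqrt (4^2)" by (rule real_sqrt_le_mono) simp
      hence "sqrt 2 \<le> 4" by simp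
      thus "\<rho> * sqrt 2 \<le> 4 * \<rho>" using assms(1) by simp
    qed (use S0 rpos in auto)
    thus ?thesis using A0 by simp
  qed
  finally show ?thesis unfolding A_def S_def Q_def K_def .
qed

end
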